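(* If $n\ge2$, then $$b_n(y;-t,t,t)=(-1)^n2^{n-2}t^{n-1}(y-1)y.$$ In particular, for $n\ge2$ the statistic on $I_n$ recording the number of levels is balanced, i.e. the number of members of $I_n$ with an even number of levels equals the number with an odd number of levels.
   Context: An inversion sequence of length $n$ is a sequence $\rho=\rho_1\cdots\rho_n$ of integers with $1\le \rho_i\le i$ for all $i$; $I_n$ is the set of them and $I_{n,i}$ those with last letter $i$. A level, descent, or ascent of $\rho$ is an index $i\in[n-1]$ with $\rho_i=\rho_{i+1}$, $\rho_i>\rho_{i+1}$, or $\rho_i<\rho_{i+1}$, respectively. Define $b_n(y;p,q,r)=\sum_{i=1}^n y^i\sum_{\rho\in I_{n,i}}p^{\mathrm{lev}(\rho)}q^{\mathrm{des}(\rho)}r^{\mathrm{asc}(\rho)}$. *)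

theory Defs
  imports Main
begin

text \<open>Inversion sequences of length n: lists rho of length n with 1 <= rho_i <= i,
  where the 1-based entry rho_i is stored at list index i-1.\<close>
definition inv_seqs :: "nat \<Rightarrow> nat list set" where
  "inv_seqs n = {rho. length rho = n \<and> (\<forall>i<n. 1 \<le> rho ! i \<and> rho ! i \<le> i + 1)}"

definition inv_seqs_last :: "nat \<Rightarrow> nat \<Rightarrow> nat list set" where
  "inv_seqs_last n i = {rho \<in> inv_seqs n. last rho = i}"

definition lev :: "nat list \<Rightarrow> nat" where
  "lev rho = card {i. i + 1 < length rho \<and> rho ! i = rho ! (i + 1)}"

definition des :: "nat list \<Rightarrow> nat" where
  "des rho = card {i. i + 1 < length rho \<and> rho ! i > rho ! (i + 1)}"

definition asc :: "nat list \<Rightarrow> nat" where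
  "asc rho = card {i. i + 1 < length rho \<and> rho ! i < rho ! (i + 1)}"

definition b_poly :: "nat \<Rightarrow> 'a::comm_ring_1 \<Rightarrow> 'a \<Rightarrow> 'a \<Rightarrow> 'a \<Rightarrow> 'a" where
  "b_poly n y p q r =
     (\<Sum>i = 1..n. y ^ i * (\<Sum>rho \<in> inv_seqs_last n i. p ^ lev rho * q ^ des rho * r ^ asc rho))"

end

theory Submission
  imports Defs
begin


lemma fin_inv: "finite (inv_seqs n)"
proof -
  have "inv_seqs n \<subseteq> {xs. set xs \<subseteq> {0..n} \<and> length xs = n}"
  proof
    fix xs assume xs: "xs \<in> inv_seqs n"
    have "x \<le> n" if "x \<in> set xs" for x
    proof -
      obtain i where i: "i < length xs" "x = xs ! i" using \<open>x \<in> set xs\<close> by (auto simp: in_set_conv_nth)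
      then show ?thesis using xs by (auto simp: inv_seqs_def)
    qed
    then show "xs \<in> {xs. set xs \<subseteq> {0..n} \<and> length xs = n}" using xs by (auto simp: inv_seqs_def)
  qed
  moreover have "finite {xs. set xs \<subseteq> {0..n} \<and> length xs = n}"
    by (rule finite_lists_length_eq) simp
  ultimately show ?thesis by (rule finite_subset)
qed

lemma inv_snoc: "inv_seqs (Suc n) = (\<lambda>(xs,j). xs @ [j]) ` (inv_seqs n \<times> {1..Suc n})"
proof
  show "inv_seqs (Suc n) \<subseteq> (\<lambda>(xs,j). xs @ [j]) ` (inv_seqs n \<times> {1..Suc n})"
  proof
    fix rho assume r: "rho \<in> inv_seqs (Suc n)"
    then have len: "length rho = Suc n" by (simp add: inv_seqs_def)
    then have ne: "rho \<noteq> []" by auto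
    have e: "rho = butlast rho @ [last rho]" using ne by simp
    have "butlast rho \<in> inv_seqs n" using r len by (auto simp: inv_seqs_def nth_butlast)
    moreover have "last rho = rho ! n" using len ne by (simp add: last_conv_nth)
    then have "last rho \<in> {1..Suc n}" using r by (auto simp: inv_seqs_def)
    ultimately show "rho \<in> (\<lambda>(xs,j). xs @ [j]) ` (inv_seqs n \<times> {1..Suc n})"
      using e by (auto intro!: image_eqI[where x="(butlast rho, last rho)"])
  qed
next
  show "(\<lambda>(xs,j). xs @ [j]) ` (inv_seqs n \<times> {1..Suc n}) \<subseteq> inv_seqs (Suc n)"
    by (auto simp: inv_seqs_def nth_append less_Suc_eq)
qed

lemma inj_snoc: "inj_on (\<lambda>(xs,j). xs @ [j]) A"
  by (auto simp: inj_on_def)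

lemma lev_snoc:
  assumes "xs \<noteq> []"
  shows "lev (xs @ [j]) = lev xs + (if last xs = j then 1 else 0)"
proof -
  let ?A = "{i. i + 1 < length xs \<and> xs ! i = xs ! (i + 1)}"
  have fin: "finite ?A" by (rule finite_subset[of _ "{..<length xs}"]) auto
  have last: "last xs = xs ! (length xs - 1)" using assms by (simp add: last_conv_nth)
  have eq: "{i. i + 1 < length (xs @ [j]) \<and> (xs @ [j]) ! i = (xs @ [j]) ! (i + 1)}
     = ?A \<union> (if last xs = j then {length xs - 1} else {})"
  proof (rule set_eqI)
    fix i
    show "i \<in> {i. i + 1 < length (xs @ [j]) \<and> (xs @ [j]) ! i = (xs @ [j]) ! (i + 1)} \<longleftrightarrow>
      i \<in> ?A \<union> (if last xs = j then {length xs - 1} else {})"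
    proof (cases "i + 1 < length xs")
      case True then show ?thesis by (auto simp: nth_append)
    next
      case False
      show ?thesis
      proof (cases "i + 1 = length xs")
        case True
        then have "i = length xs - 1" by simp
        then show ?thesis using True last by (auto simp: nth_append)
      next
        case False
        then show ?thesis using \<open>\<not> i + 1 < length xs\<close> assms by auto
      qed
    qed
  qed
  have "length xs - 1 \<notin> ?A" by auto
  then show ?thesis unfolding lev_def eq using fin by auto
qed

lemma lda:
  assumes "rho \<in> inv_seqs n" "n \<ge> 1"
  shows "lev rho + des rho + asc rho = n - 1"
proof -
  have len: "length rho = n" using assms by (simp add: inv_seqs_def)
  let ?L = "{i. i + 1 < length rho \<and> rho ! i = rho ! (i + 1)}"
  let ?D = "{i. i + 1 < length rho \<and> rho ! i > rho ! (i + 1)}"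
  let ?E = "{i. i + 1 < length rho \<and> rho ! i < rho ! (i + 1)}"
  have f: "finite ?L" "finite ?D" "finite ?E"
    by (rule finite_subset[of _ "{..<length rho}"], auto)+
  have u: "?L \<union> ?D \<union> ?E = {..<n - 1}" using len by auto
  have c1: "card (?L \<union> ?D) = card ?L + card ?D"
    using f by (intro card_Un_disjoint) auto
  have "card (?L \<union> ?D \<union> ?E) = card (?L \<union> ?D) + card ?E"
    using f by (intro card_Un_disjoint) auto
  then have "card (?L \<union> ?D \<union> ?E) = card ?L + card ?D + card ?E" using c1 by simp
  then show ?thesis using u by (simp add: lev_def des_def asc_def)
qed



definition F :: "nat \<Rightarrow> nat \<Rightarrow> int" where
  "F n j = (\<Sum>xs\<in>inv_seqs n. if last xs = j then (-1::int) ^ lev xs else 0)"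
definition S :: "nat \<Rightarrow> int" where
  "S n = (\<Sum>xs\<in>inv_seqs n. (-1::int) ^ lev xs)"

lemma sum_snoc: "(\<Sum>rho\<in>inv_seqs (Suc n). g rho) = (\<Sum>xs\<in>inv_seqs n. \<Sum>j=1..Suc n. g (xs @ [j]))"
proof -
  have "(\<Sum>rho\<in>inv_seqs (Suc n). g rho) = (\<Sum>p\<in>inv_seqs n \<times> {1..Suc n}. g ((\<lambda>(xs,j). xs @ [j]) p))"
    unfolding inv_snoc by (rule sum.reindex[OF inj_snoc, unfolded comp_def])
  also have "... = (\<Sum>xs\<in>inv_seqs n. \<Sum>j=1..Suc n. g (xs @ [j]))"
  proof -
    have "(\<lambda>p. g ((\<lambda>(xs,j). xs @ [j]) p)) = case_prod (\<lambda>xs j. g (xs @ [j]))"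
      by (rule ext) (simp split: prod.split)
    then show ?thesis by (simp only: sum.cartesian_product)
  qed
  finally show ?thesis .
qed

lemma mem_props: assumes "xs \<in> inv_seqs n" "n \<ge> 1"
  shows "xs \<noteq> []" "last xs \<in> {1..n}"
proof -
  have len: "length xs = n" using assms by (simp add: inv_seqs_def)
  then show "xs \<noteq> []" using assms by auto
  then have "last xs = xs ! (n - 1)" using len by (simp add: last_conv_nth)
  moreover have "\<forall>i<n. 1 \<le> xs ! i \<and> xs ! i \<le> i + 1" using assms by (simp add: inv_seqs_def)
  then have "1 \<le> xs ! (n - 1) \<and> xs ! (n - 1) \<le> n - 1 + 1" using assms by (drule_tac x="n-1" in spec) simp
  ultimately show "last xs \<in> {1..n}" using assms by auto
qed

lemma inv1: "inv_seqs 1 = {[1]}"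
proof -
  have "inv_seqs 1 = inv_seqs (Suc 0)" by simp
  also have "... = {[1]}" unfolding inv_snoc
    by (auto simp: inv_seqs_def)
  finally show ?thesis .
qed

lemma inv1': "inv_seqs (Suc 0) = {[1]}" using inv1 by simp

lemma S1: "S 1 = 1" by (simp add: S_def inv1 inv1' lev_def)
lemma F1: "F 1 j = (if j = 1 then 1 else 0)" by (simp add: F_def inv1 inv1' lev_def)

lemma F_step: assumes "n \<ge> 1"
  shows "F (Suc n) j = (if j \<in> {1..Suc n} then S n - 2 * F n j else 0)"
proof -
  have "F (Suc n) j = (\<Sum>xs\<in>inv_seqs n. \<Sum>k=1..Suc n. if k = j then (-1::int) ^ lev (xs @ [k]) else 0)"
    unfolding F_def sum_snoc by simp
  also have "... = (\<Sum>xs\<in>inv_seqs n. if j \<in> {1..Suc n} then (-1::int) ^ lev (xs @ [j]) else 0)"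
    by (simp only: sum.delta[OF finite_atLeastAtMost])
  also have "... = (\<Sum>xs\<in>inv_seqs n. if j \<in> {1..Suc n} then (-1::int) ^ lev xs - 2 * (if last xs = j then (-1::int) ^ lev xs else 0) else 0)"
  proof (rule sum.cong[OF refl])
    fix xs assume "xs \<in> inv_seqs n"
    then have "xs \<noteq> []" using mem_props assms by blast
    then show "(if j \<in> {1..Suc n} then (-1::int) ^ lev (xs @ [j]) else 0) = (if j \<in> {1..Suc n} then (-1::int) ^ lev xs - 2 * (if last xs = j then (-1::int) ^ lev xs else 0) else 0)"
      by (simp add: lev_snoc)
  qed
  also have "... = (if j \<in> {1..Suc n} then S n - 2 * F n j else 0)"
    by (simp add: S_def F_def sum_subtractf sum_distrib_left del: atLeastAtMost_iff)
  finally show ?thesis .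
qed

lemma S_step: assumes "n \<ge> 1"
  shows "S (Suc n) = (int n - 1) * S n"
proof -
  have "S (Suc n) = (\<Sum>xs\<in>inv_seqs n. \<Sum>k=1..Suc n. (-1::int) ^ lev (xs @ [k]))"
    unfolding S_def sum_snoc by simp
  also have "... = (\<Sum>xs\<in>inv_seqs n. (int n - 1) * (-1::int) ^ lev xs)"
  proof (rule sum.cong[OF refl])
    fix xs assume xs: "xs \<in> inv_seqs n"
    then have ne: "xs \<noteq> []" and l: "last xs \<in> {1..n}" using mem_props assms by blast+
    have "(\<Sum>k=1..Suc n. (-1::int) ^ lev (xs @ [k])) = (\<Sum>k=1..Suc n. (-1::int) ^ lev xs - 2 * (if last xs = k then (-1::int) ^ lev xs else 0))"
      using ne by (intro sum.cong) (auto simp: lev_snoc)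
    also have "... = (int (Suc n)) * (-1::int) ^ lev xs - 2 * (-1::int) ^ lev xs"
      using l by (simp add: sum_subtractf sum_distrib_left[symmetric] sum.delta)
    finally show "(\<Sum>k=1..Suc n. (-1::int) ^ lev (xs @ [k])) = (int n - 1) * (-1::int) ^ lev xs"
      by (simp add: algebra_simps)
  qed
  also have "... = (int n - 1) * S n" by (simp add: S_def sum_distrib_left)
  finally show ?thesis .
qed

lemma S_zero: "n \<ge> 2 \<Longrightarrow> S n = 0"
proof (induction n rule: nat_induct_at_least)
  case base
  then show ?case using S_step[of 1] S1 by (simp add: numeral_2_eq_2)
next
  case (Suc n)
  then show ?case using S_step[of n] by simp
qed

lemma F_closed: "n \<ge> 2 \<Longrightarrow> F n j = (if j = 1 then (-1) ^ (n - 1) * 2 ^ (n - 2) else if j = 2 then - ((-1) ^ (n - 1) * 2 ^ (n - 2)) else 0)"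
proof (induction n arbitrary: j rule: nat_induct_at_least)
  case base
  then show ?case using F_step[of 1 j] S1 F1 by (auto simp: numeral_2_eq_2)
next
  case (Suc n)
  have "F (Suc n) j = (if j \<in> {1..Suc n} then - 2 * F n j else 0)"
    using F_step[of n j] S_zero[of n] Suc by simp
  moreover obtain m where m: "n = Suc (Suc m)" using Suc(1) by (metis add_2_eq_Suc le_Suc_ex)
  ultimately show ?case using Suc by (auto simp: m)
qed



lemma weight: assumes "rho \<in> inv_seqs n" "n \<ge> 1"
  shows "(- t) ^ lev rho * t ^ des rho * t ^ asc rho = (of_int ((-1::int) ^ lev rho) :: 'a::comm_ring_1) * t ^ (n - 1)"
proof -
  have "(- t) ^ lev rho * t ^ des rho * t ^ asc rho = (-1) ^ lev rho * (t ^ lev rho * t ^ des rho * t ^ asc rho)"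
    by (subst power_minus) (simp only: mult.assoc)
  also have "... = (-1) ^ lev rho * t ^ (lev rho + des rho + asc rho)"
    by (simp only: power_add)
  finally have "(- t) ^ lev rho * t ^ des rho * t ^ asc rho = (-1) ^ lev rho * t ^ (lev rho + des rho + asc rho)" .
  then show ?thesis using lda[OF assms] by simp
qed

lemma inner: assumes "n \<ge> 1"
  shows "(\<Sum>rho \<in> inv_seqs_last n i. (- t) ^ lev rho * t ^ des rho * t ^ asc rho) = (of_int (F n i) :: 'a::comm_ring_1) * t ^ (n - 1)"
proof -
  have "(\<Sum>rho \<in> inv_seqs_last n i. (- t) ^ lev rho * t ^ des rho * t ^ asc rho)
     = (\<Sum>rho \<in> inv_seqs n. if last rho = i then (- t) ^ lev rho * t ^ des rho * t ^ asc rho else 0)"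
    unfolding inv_seqs_last_def by (rule sum.inter_filter[OF fin_inv])
  also have "... = (\<Sum>rho \<in> inv_seqs n. of_int (if last rho = i then (-1::int) ^ lev rho else 0) * t ^ (n - 1))"
    by (rule sum.cong[OF refl]) (simp add: weight[OF _ assms])
  also have "... = (of_int (F n i) :: 'a) * t ^ (n - 1)"
    by (simp add: F_def sum_distrib_right of_int_sum del: of_int_power)
  finally show ?thesis .
qed

lemma alg: "(y::'a::comm_ring_1) * (- a * b * c) + - (y^2 * (- a * b * c)) = a * b * c * (y - 1) * y"
  by (simp add: power2_eq_square algebra_simps)

lemma part1: assumes "n \<ge> 2"
  shows "b_poly n y (- t) t t = (-1) ^ n * 2 ^ (n - 2) * t ^ (n - 1) * (y - 1) * (y :: 'a::comm_ring_1)"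
proof -
  obtain m where m: "n = Suc (Suc m)" using assms by (metis add_2_eq_Suc le_Suc_ex)
  define C :: 'a where "C = (-1) ^ Suc m * 2 ^ m * t ^ (Suc m)"
  have "b_poly n y (- t) t t = (\<Sum>i = 1..n. y ^ i * ((of_int (F n i) :: 'a) * t ^ (n - 1)))"
    unfolding b_poly_def using assms by (simp add: inner)
  also have "... = (\<Sum>i = 1..n. (if i = 1 then y * C else 0) + (if i = 2 then - (y^2 * C) else 0))"
  proof (rule sum.cong[OF refl])
    fix i assume "i \<in> {1..n}"
    have Fi: "F n i = (if i = 1 then (-1) ^ Suc m * 2 ^ m else if i = 2 then - ((-1) ^ Suc m * 2 ^ m) else 0)"
    proof -
      have a: "n - 1 = Suc m" "n - 2 = m" by (simp_all add: m)
      show ?thesis using F_closed[OF assms, of i] unfolding a by simp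
    qed
    have tn: "t ^ (n - 1) = t ^ Suc m" by (simp add: m)
    show "y ^ i * ((of_int (F n i) :: 'a) * t ^ (n - 1)) = (if i = 1 then y * C else 0) + (if i = 2 then - (y^2 * C) else 0)"
      unfolding Fi tn C_def by auto
  qed
  also have "... = (\<Sum>i = 1..n. (if i = 1 then y * C else 0)) + (\<Sum>i = 1..n. (if i = 2 then - (y^2 * C) else 0))"
    by (rule sum.distrib)
  also have "... = y * C + - (y^2 * C)"
  proof -
    have "(1::nat) \<in> {1..n}" "(2::nat) \<in> {1..n}" using assms by auto
    then show ?thesis by (simp only: sum.delta finite_atLeastAtMost if_True)
  qed
  also have "... = (-1) ^ n * 2 ^ (n - 2) * t ^ (n - 1) * (y - 1) * y"
  proof -
    have "(-1::'a) ^ n = (-1) ^ m" by (simp add: m)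
    moreover have "n - 2 = m" "n - 1 = Suc m" by (simp_all add: m)
    moreover have "(-1::'a) ^ Suc m = - ((-1) ^ m)" by simp
    ultimately show ?thesis unfolding C_def by (simp only: alg)
  qed
  finally show ?thesis .
qed

lemma part2: assumes "n \<ge> 2"
  shows "card {rho \<in> inv_seqs n. even (lev rho)} = card {rho \<in> inv_seqs n. odd (lev rho)}"
proof -
  have "0 = S n" using S_zero[OF assms] by simp
  also have "... = (\<Sum>rho\<in>inv_seqs n. if even (lev rho) then 1 else -1)"
    unfolding S_def by (rule sum.cong) auto
  also have "... = (\<Sum>rho\<in>{rho \<in> inv_seqs n. even (lev rho)}. 1) + (\<Sum>rho\<in>{rho \<in> inv_seqs n. odd (lev rho)}. -1)"
  proof -
    have e1: "inv_seqs n \<inter> {x. even (lev x)} = {rho \<in> inv_seqs n. even (lev rho)}" by auto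
    have e2: "inv_seqs n \<inter> - {x. even (lev x)} = {rho \<in> inv_seqs n. odd (lev rho)}" by auto
    show ?thesis by (simp only: sum.If_cases[OF fin_inv] e1 e2)
  qed
  also have "... = int (card {rho \<in> inv_seqs n. even (lev rho)}) - int (card {rho \<in> inv_seqs n. odd (lev rho)})"
    by simp
  finally show ?thesis by simp
qed


theorem proposition3p8:
  fixes n :: nat and y t :: "'a::comm_ring_1"
  assumes "n \<ge> 2"
  shows "b_poly n y (- t) t t = (-1) ^ n * 2 ^ (n - 2) * t ^ (n - 1) * (y - 1) * y
    \<and> card {rho \<in> inv_seqs n. even (lev rho)} = card {rho \<in> inv_seqs n. odd (lev rho)}"
  using part1[OF assms] part2[OF assms] by blast

end
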